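(* Let $k\ge 2$ and let $\mathbf{d}_1,\dots,\mathbf{d}_k\in\mathbb{R}^3$ be unit vectors. Then there exists a unit vector $\mathbf{d}\in\mathbb{R}^3$ such that $\frac{1}{10k}\le|\mathbf{d}^\top\mathbf{d}_i|\le 1-\frac{1}{10k}$ for all $1\le i\le k$. *)

theory Defs
  imports "HOL-Analysis.Analysis"
begin

end

theory Submission imports Defs "HOL-Analysis.Analysis" begin
lemma box_mem: "x \<in> cbox (vector[a1,a2,a3]) (vector[b1,b2,b3] :: real^3) \<longleftrightarrow>
   a1 \<le> x$1 \<and> x$1 \<le> b1 \<and> a2 \<le> x$2 \<and> x$2 \<le> b2 \<and> a3 \<le> x$3 \<and> x$3 \<le> b3"
  unfolding mem_box_cart forall_3 vector_3 by (simp only: conj_assoc)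
lemma sum3: "(\<Sum>i\<in>UNIV. f i :: real) = f (1::3) + f 2 + f 3"
proof -
  have "(UNIV::3 set) = {1,2,3}" by (rule UNIV_3)
  moreover have "(\<Sum>i\<in>{1,2,3::3}. f i) = f 1 + f 2 + f 3" by (simp add: add.assoc)
  ultimately show ?thesis by simp
qed
lemma norm3: "norm (y::real^3) ^ 2 = y$1^2 + y$2^2 + y$3^2"
  unfolding norm_vec_def L2_set_def sum3 by simp

lemma prod3: "(\<Prod>i\<in>UNIV. f i :: real) = f (1::3) * f 2 * f 3"
proof -
  have "(UNIV::3 set) = {1,2,3}" by (rule UNIV_3)
  moreover have "(\<Prod>i\<in>{1,2,3::3}. f i) = f 1 * f 2 * f 3" by (simp add: mult.assoc)
  ultimately show ?thesis by simp
qed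

lemma box_meas: assumes "a1 \<le> b1" "a2 \<le> b2" "a3 \<le> b3"
  shows "measure lebesgue (cbox (vector[a1,a2,a3]) (vector[b1,b2,b3] :: real^3)) = (b1-a1)*(b2-a2)*(b3-a3)"
proof -
  have "vector[a1,a2,a3] \<in> cbox (vector[a1,a2,a3]) (vector[b1,b2,b3] :: real^3)"
    using assms unfolding box_mem vector_3 by simp
  then have ne: "cbox (vector[a1,a2,a3]) (vector[b1,b2,b3] :: real^3) \<noteq> {}" by blast
  have "measure lebesgue (cbox (vector[a1,a2,a3]) (vector[b1,b2,b3] :: real^3)) = 
        measure lborel (cbox (vector[a1,a2,a3]) (vector[b1,b2,b3] :: real^3))"
    by (rule measure_completion) simp
  also have "\<dots> = (\<Prod>i\<in>UNIV. (vector[b1,b2,b3] :: real^3) $ i - (vector[a1,a2,a3] :: real^3) $ i)"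
    by (rule content_cbox_cart[OF ne])
  also have "\<dots> = (b1-a1)*(b2-a2)*(b3-a3)" unfolding prod3 vector_3 ..
  finally show ?thesis .
qed

lemma boxes:
  fixes y :: "real^3"
  assumes e: "0 < e" "e \<le> 1/20" and ny: "norm y < 1"
    and bad: "\<not> (e * norm y \<le> \<bar>y$3\<bar> \<and> \<bar>y$3\<bar> \<le> (1-e) * norm y)"
  shows "y \<in> cbox (vector[-1,-1,-e]) (vector[1,1,e]) \<union> cbox (vector[-sqrt(2*e),-sqrt(2*e),-1]) (vector[sqrt(2*e),sqrt(2*e),1])"
proof -
  have c: "\<bar>y$i\<bar> \<le> norm y" for i using component_le_norm_cart[of y i] by simp
  have n2: "norm y ^ 2 = y$1^2 + y$2^2 + y$3^2" by (rule norm3)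
  show ?thesis
  proof (cases "\<bar>y$3\<bar> < e * norm y")
    case True
    have "e * norm y \<le> e" using e ny by (simp add: mult_left_le)
    with True c[of 1] c[of 2] ny have "\<bar>y$3\<bar> \<le> e" "\<bar>y$1\<bar> \<le> 1" "\<bar>y$2\<bar> \<le> 1" by linarith+
    then show ?thesis by (simp only: box_mem Un_iff) linarith
  next
    case False
    then have g: "\<bar>y$3\<bar> > (1-e) * norm y" using bad by linarith
    have ge: "(1-e) * norm y \<ge> 0" using e by simp
    have "((1-e) * norm y)^2 \<le> \<bar>y$3\<bar>^2" using g ge by (intro power_mono) auto
    then have "y$3^2 \<ge> (1-e)^2 * norm y ^2" by (simp add: power_mult_distrib)
    then have "y$1^2 + y$2^2 \<le> (1 - (1-e)^2) * norm y^2" using n2 by (simp add: algebra_simps)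
    also have "\<dots> \<le> 2*e * norm y ^2" using e by (intro mult_right_mono) (auto simp: power2_eq_square algebra_simps)
    also have "\<dots> \<le> 2*e" using e ny
      by (simp add: mult_left_le power_le_one)
    finally have s: "y$1^2 + y$2^2 \<le> 2*e" .
    have "\<bar>y$1\<bar> = sqrt (y$1^2)" by simp
    also have "\<dots> \<le> sqrt(2*e)" using s by (intro real_sqrt_le_mono) (smt (verit) zero_le_power2)
    finally have 1: "\<bar>y$1\<bar> \<le> sqrt(2*e)" .
    have "\<bar>y$2\<bar> = sqrt (y$2^2)" by simp
    also have "\<dots> \<le> sqrt(2*e)" using s by (intro real_sqrt_le_mono) (smt (verit) zero_le_power2)
    finally have 2: "\<bar>y$2\<bar> \<le> sqrt(2*e)" .
    have 3: "\<bar>y$3\<bar> \<le> 1" using c[of 3] ny by linarith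
    show ?thesis using 1 2 3 by (simp only: box_mem Un_iff) linarith
  qed
qed


theorem lemma7p2:
  fixes k :: nat and ds :: "nat \<Rightarrow> real^3"
  assumes "k \<ge> 2"
    and "\<And>i. i \<in> {1..k} \<Longrightarrow> norm (ds i) = 1"
  shows "\<exists>d :: real^3. norm d = 1 \<and>
           (\<forall>i\<in>{1..k}. 1 / (10 * real k) \<le> \<bar>d \<bullet> ds i\<bar> \<and>
                          \<bar>d \<bullet> ds i\<bar> \<le> 1 - 1 / (10 * real k))"
proof (rule ccontr)
  assume H: "\<not> ?thesis"
  define e where "e = 1 / (10 * real k)"
  have kpos: "real k \<ge> 2" using assms(1) by simp
  have e0: "0 < e" and e1: "e \<le> 1/20" using kpos by (auto simp: e_def field_simps)
  define s where "s = sqrt (2*e)"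
  have s0: "0 \<le> s" and s2: "s * s = 2*e" using e0 by (auto simp: s_def)
  define B1 where "B1 = cbox (vector[-1,-1,-e]) (vector[1,1,e] :: real^3)"
  define B2 where "B2 = cbox (vector[-s,-s,-1]) (vector[s,s,1] :: real^3)"
  define B where "B = B1 \<union> B2"
  have B1m: "B1 \<in> lmeasurable" and B2m: "B2 \<in> lmeasurable" by (auto simp: B1_def B2_def)
  have Bm: "B \<in> lmeasurable" using B1m B2m by (auto simp: B_def)
  have mB1: "measure lebesgue B1 = 8*e" unfolding B1_def using e0
    by (subst box_meas) auto
  have mB2: "measure lebesgue B2 = 16*e" unfolding B2_def using s0 s2
    by (subst box_meas) (auto simp: algebra_simps)
  have mB: "measure lebesgue B \<le> 24*e"
    using measure_Un_le[of B1 lebesgue B2] B1m B2m mB1 mB2 by (simp add: B_def fmeasurableD)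
  have "\<forall>i\<in>{1..k}. \<exists>h. orthogonal_transformation h \<and> h (axis (3::3) (1::real)) = ds i"
  proof
    fix i assume i: "i \<in> {1..k}"
    have "norm (axis (3::3) 1 :: real^3) = norm (ds i)" using assms(2)[OF i] by simp
    then obtain h where "orthogonal_transformation h" "h (axis (3::3) (1::real)) = ds i"
      using orthogonal_transformation_exists by metis
    then show "\<exists>h. orthogonal_transformation h \<and> h (axis (3::3) (1::real)) = ds i" by blast
  qed
  then obtain h where h: "\<And>i. i \<in> {1..k} \<Longrightarrow> orthogonal_transformation (h i) \<and> h i (axis (3::3) (1::real)) = ds i"
    by metis
  have cover: "ball 0 1 \<subseteq> {0} \<union> (\<Union>i\<in>{1..k}. h i ` B)"
  proof
    fix x :: "real^3" assume xb: "x \<in> ball 0 1"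
    show "x \<in> {0} \<union> (\<Union>i\<in>{1..k}. h i ` B)"
    proof (cases "x = 0")
      case True then show ?thesis by simp
    next
      case False
      then have nx: "norm x > 0" by simp
      define d where "d = x /\<^sub>R norm x"
      have nd: "norm d = 1" using nx by (simp add: d_def)
      from H nd obtain i where i: "i \<in> {1..k}" and
        bad: "\<not> (e \<le> \<bar>d \<bullet> ds i\<bar> \<and> \<bar>d \<bullet> ds i\<bar> \<le> 1 - e)"
        unfolding e_def by blast
      have ot: "orthogonal_transformation (h i)" and he: "h i (axis (3::3) (1::real)) = ds i" using h[OF i] by auto
      define y where "y = inv (h i) x"
      have hy: "h i y = x" unfolding y_def
        using orthogonal_transformation_surj[OF ot] by (simp add: surj_f_inv_f)
      have ny: "norm y = norm x" using orthogonal_transformation_norm[OF ot, of y] hy by simp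
      have y3: "y$3 = x \<bullet> ds i"
      proof -
        have "y$3 = y \<bullet> (axis (3::3) (1::real))" by (rule cart_eq_inner_axis)
        also have "\<dots> = h i y \<bullet> h i (axis (3::3) (1::real))"
          using ot unfolding orthogonal_transformation_def by metis
        also have "\<dots> = x \<bullet> ds i" using hy he by simp
        finally show ?thesis .
      qed
      have dd: "d \<bullet> ds i = y$3 / norm y" using ny y3 by (simp add: d_def divide_inverse_commute)
      have bady: "\<not> (e * norm y \<le> \<bar>y$3\<bar> \<and> \<bar>y$3\<bar> \<le> (1-e) * norm y)"
      proof
        assume a: "e * norm y \<le> \<bar>y$3\<bar> \<and> \<bar>y$3\<bar> \<le> (1-e) * norm y"
        have np: "norm y > 0" using nx ny by simp
        have "e \<le> \<bar>y$3\<bar> / norm y" using a np by (simp add: field_simps)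
        moreover have "\<bar>y$3\<bar> / norm y \<le> 1 - e" using a np by (simp add: field_simps)
        ultimately show False using bad dd np by simp
      qed
      have "norm y < 1" using xb ny by simp
      then have "y \<in> B" using boxes[OF e0 e1 _ bady] unfolding B_def B1_def B2_def s_def by blast
      then have "x \<in> h i ` B" using hy by blast
      then show ?thesis using i by blast
    qed
  qed
  have hBm: "h i ` B \<in> lmeasurable" and hBmeas: "measure lebesgue (h i ` B) = measure lebesgue B"
    if "i \<in> {1..k}" for i
    using measurable_orthogonal_image[OF _ Bm] measure_orthogonal_image[OF _ Bm] h[OF that] by auto
  have Um: "(\<Union>i\<in>{1..k}. h i ` B) \<in> lmeasurable"
    using hBm by (intro fmeasurable.finite_UN) auto
  have U0: "{0} \<union> (\<Union>i\<in>{1..k}. h i ` B) \<in> lmeasurable"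
    by (intro fmeasurable.Un Um) (metis cbox_idem lmeasurable_cbox)
  have "4/3*pi = measure lebesgue (ball (0::real^3) 1)"
    by (simp add: content_ball unit_ball_vol_3)
  also have "\<dots> \<le> measure lebesgue ({0} \<union> (\<Union>i\<in>{1..k}. h i ` B))"
    by (rule measure_mono_fmeasurable[OF cover]) (use U0 in \<open>auto dest: fmeasurableD\<close>)
  also have "\<dots> \<le> measure lebesgue {0::real^3} + measure lebesgue (\<Union>i\<in>{1..k}. h i ` B)"
    using Um by (intro measure_Un_le) (auto simp: fmeasurableD)
  also have "measure lebesgue {0::real^3} = 0" by simp
  also have "measure lebesgue (\<Union>i\<in>{1..k}. h i ` B) \<le> (\<Sum>i\<in>{1..k}. measure lebesgue (h i ` B))"
    using hBm by (intro measure_UNION_le) (auto simp: fmeasurableD)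
  also have "\<dots> = (\<Sum>i\<in>{1..k}. measure lebesgue B)" using hBmeas by simp
  also have "\<dots> \<le> (\<Sum>i\<in>{1..k}. 24 * e)" using mB by (intro sum_mono) auto
  also have "\<dots> = 24 * e * real k" by simp
  also have "\<dots> = 12/5" using kpos by (simp add: e_def)
  finally have "4/3*pi \<le> 12/5" by simp
  then show False using pi_gt3 by simp
qed

end
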